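(* Let $\mathfrak f$ be a simple compact Lie algebra and $n\in\mathbb N$. Suppose a Lie subalgebra $\mathfrak k\subset n\mathfrak f$ contains $\mathrm{diag}(\mathfrak f)=\{(X,\dots,X):X\in\mathfrak f\}$. Then there is a decomposition $n\mathfrak f=\bigoplus_{i=1}^s n_i\mathfrak f$ into a direct sum of ideals (grouping the $n$ copies of $\mathfrak f$ into $s$ groups of sizes $n_i$), with $s\ge1$, $n_i\ge1$, $\sum_in_i=n$, such that $\mathfrak k=\mathfrak k_1\oplus\cdots\oplus\mathfrak k_s$ with $\mathfrak k_i=\mathrm{diag}(\mathfrak f)\subset n_i\mathfrak f$.
   Context: $n\mathfrak f=\mathfrak f\oplus\cdots\oplus\mathfrak f$ ($n$ copies). *)

theory Defs
  imports "HOL-Analysis.Analysis" "HOL-Library.Disjoint_Sets"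
begin

definition lie_algebra :: "('a::real_vector \<Rightarrow> 'a \<Rightarrow> 'a) \<Rightarrow> bool" where
  "lie_algebra br \<longleftrightarrow>
     (\<forall>x. linear (br x)) \<and> (\<forall>y. linear (\<lambda>x. br x y)) \<and>
     (\<forall>x. br x x = 0) \<and>
     (\<forall>x y z. br x (br y z) + br y (br z x) + br z (br x y) = 0)"

definition lie_ideal :: "('a::real_vector \<Rightarrow> 'a \<Rightarrow> 'a) \<Rightarrow> 'a set \<Rightarrow> bool" where
  "lie_ideal br I \<longleftrightarrow> subspace I \<and> (\<forall>x y. y \<in> I \<longrightarrow> br x y \<in> I)"

definition lie_subalgebra :: "('a::real_vector \<Rightarrow> 'a \<Rightarrow> 'a) \<Rightarrow> 'a set \<Rightarrow> bool" where
  "lie_subalgebra br K \<longleftrightarrow> subspace K \<and> (\<forall>x\<in>K. \<forall>y\<in>K. br x y \<in> K)"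

definition simple_lie_algebra :: "('a::real_vector \<Rightarrow> 'a \<Rightarrow> 'a) \<Rightarrow> bool" where
  "simple_lie_algebra br \<longleftrightarrow> lie_algebra br \<and> (\<exists>x y. br x y \<noteq> 0) \<and>
     (\<forall>I. lie_ideal br I \<longrightarrow> I = {0} \<or> I = UNIV)"

definition compact_lie_algebra :: "('a::real_vector \<Rightarrow> 'a \<Rightarrow> 'a) \<Rightarrow> bool" where
  "compact_lie_algebra br \<longleftrightarrow> lie_algebra br \<and>
     (\<exists>B :: 'a \<Rightarrow> 'a \<Rightarrow> real.
        (\<forall>x. linear (B x)) \<and> (\<forall>x y. B x y = B y x) \<and> (\<forall>x. x \<noteq> 0 \<longrightarrow> B x x > 0) \<and>
        (\<forall>x y z. B (br x y) z = - B y (br x z)))"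

text \<open>Componentwise bracket on the direct sum n f = f \<oplus> ... \<oplus> f, indexed by the finite type 'n.\<close>
definition sum_bracket :: "('a \<Rightarrow> 'a \<Rightarrow> 'a) \<Rightarrow> 'a^'n \<Rightarrow> 'a^'n \<Rightarrow> 'a^'n" where
  "sum_bracket br x y = (\<chi> i. br (x $ i) (y $ i))"

definition diag :: "('a^'n) set" where
  "diag = {(\<chi> i. X) | X. True}"

end

theory Submission
  imports Defs
begin

definition projT :: "(('a::real_vector)^('n::finite)) set \<Rightarrow> 'n \<Rightarrow> 'n set \<Rightarrow> 'a set" where
  "projT K i T = {z $ i | z. z \<in> K \<and> (\<forall>t\<in>T. z $ t = 0)}"

lemma br_0:
  assumes "lie_algebra br"
  shows "br x 0 = 0" "br 0 y = 0"
proof -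
  have "linear (br x)" "linear (\<lambda>x. br x y)" using assms unfolding lie_algebra_def by auto
  then show "br x 0 = 0" "br 0 y = 0" using linear_0 by (fastforce, force)
qed

lemma proj_ideal:
  fixes br :: "'a::real_vector \<Rightarrow> 'a \<Rightarrow> 'a" and K :: "('a^'n::finite) set"
  assumes la: "lie_algebra br" and sub: "lie_subalgebra (sum_bracket br) K"
    and dg: "diag \<subseteq> K"
  shows "lie_ideal br (projT K i T)"
proof -
  have sK: "subspace K" using sub unfolding lie_subalgebra_def by auto
  have "subspace (projT K i T)"
    unfolding subspace_def projT_def
  proof (intro conjI allI ballI impI)
    show "0 \<in> {z $ i |z. z \<in> K \<and> (\<forall>t\<in>T. z $ t = 0)}"
      using subspace_0[OF sK] by (intro CollectI exI[of _ 0]) auto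
  next
    fix x y assume "x \<in> {z $ i |z. z \<in> K \<and> (\<forall>t\<in>T. z $ t = 0)}"
      "y \<in> {z $ i |z. z \<in> K \<and> (\<forall>t\<in>T. z $ t = 0)}"
    then obtain u v where "u \<in> K" "\<forall>t\<in>T. u $ t = 0" "x = u $ i"
      "v \<in> K" "\<forall>t\<in>T. v $ t = 0" "y = v $ i" by auto
    then show "x + y \<in> {z $ i |z. z \<in> K \<and> (\<forall>t\<in>T. z $ t = 0)}"
      using subspace_add[OF sK] by (intro CollectI exI[of _ "u+v"]) auto
  next
    fix c x assume "x \<in> {z $ i |z. z \<in> K \<and> (\<forall>t\<in>T. z $ t = 0)}"
    then obtain u where "u \<in> K" "\<forall>t\<in>T. u $ t = 0" "x = u $ i" by auto
    then show "c *\<^sub>R x \<in> {z $ i |z. z \<in> K \<and> (\<forall>t\<in>T. z $ t = 0)}"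
      using subspace_scale[OF sK] by (intro CollectI exI[of _ "c *\<^sub>R u"]) auto
  qed
  moreover have "br x y \<in> projT K i T" if yP: "y \<in> projT K i T" for x y
  proof -
    obtain u where u: "u \<in> K" "\<forall>t\<in>T. u $ t = 0" "y = u $ i"
      using yP unfolding projT_def by auto
    have "(\<chi> k. x) \<in> K" using dg unfolding diag_def by auto
    then have "sum_bracket br (\<chi> k. x) u \<in> K" using sub u unfolding lie_subalgebra_def by auto
    then show ?thesis using u br_0[OF la] unfolding projT_def sum_bracket_def
      by (intro CollectI exI[of _ "sum_bracket br (\<chi> k. x) u"]) (auto simp: sum_bracket_def)
  qed
  ultimately show ?thesis unfolding lie_ideal_def by auto
qed

lemma ideal_univ:
  assumes "simple_lie_algebra br" "lie_ideal br I" "I \<noteq> {0}"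
  shows "I = UNIV"
  using assms unfolding simple_lie_algebra_def by auto

lemma ideal_univ2:
  assumes "simple_lie_algebra br" "lie_ideal br I" "\<And>a b. br a b \<in> I"
  shows "I = UNIV"
proof -
  obtain a b where "br a b \<noteq> 0" using assms(1) unfolding simple_lie_algebra_def by auto
  then have "I \<noteq> {0}" using assms(3)[of a b] by auto
  then show ?thesis using ideal_univ assms by auto
qed

lemma main_lemma:
  fixes br :: "'a::real_vector \<Rightarrow> 'a \<Rightarrow> 'a" and K :: "('a^'n::finite) set"
  assumes sl: "simple_lie_algebra br" and sub: "lie_subalgebra (sum_bracket br) K"
    and dg: "diag \<subseteq> K"
    and T: "\<forall>j\<in>T. \<exists>x\<in>K. x $ i \<noteq> x $ j"
  shows "projT K i T = UNIV"
proof -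
  have la: "lie_algebra br" using sl unfolding simple_lie_algebra_def by auto
  have sK: "subspace K" using sub unfolding lie_subalgebra_def by auto
  have fin: "finite T" by simp
  show ?thesis using fin T
  proof (induction T rule: finite_induct)
    case empty
    have "a \<in> projT K i {}" for a
    proof -
      have "(\<chi> k. a) \<in> K" using dg unfolding diag_def by auto
      then show ?thesis unfolding projT_def
        by (intro CollectI exI[of _ "\<chi> k. a"]) simp
    qed
    then show ?case by auto
  next
    case (insert j T)
    have IH: "projT K i T = UNIV" using insert by auto
    have Pj: "projT K i {j} = UNIV"
    proof (rule ideal_univ[OF sl proj_ideal[OF la sub dg]])
      obtain x where x: "x \<in> K" "x $ i \<noteq> x $ j" using insert.prems by auto
      have "(\<chi> k. x $ j) \<in> K" using dg unfolding diag_def by auto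
      then have "x - (\<chi> k. x $ j) \<in> K" using subspace_diff[OF sK] x by auto
      then have "(x - (\<chi> k. x $ j)) $ i \<in> projT K i {j}" unfolding projT_def
        by (intro CollectI exI[of _ "x - (\<chi> k. x $ j)"]) simp
      moreover have "(x - (\<chi> k. x $ j)) $ i \<noteq> 0" using x by auto
      ultimately show "projT K i {j} \<noteq> {0}" by (metis singletonD)
    qed
    show ?case
    proof (rule ideal_univ2[OF sl proj_ideal[OF la sub dg]])
      fix a b
      have "a \<in> projT K i T" using IH by simp
      then obtain u where u: "u \<in> K" "\<forall>t\<in>T. u $ t = 0" "a = u $ i"
        unfolding projT_def by blast
      have "b \<in> projT K i {j}" using Pj by simp
      then obtain v where v: "v \<in> K" "v $ j = 0" "b = v $ i"
        unfolding projT_def by blast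
      have "sum_bracket br u v \<in> K" using sub u v unfolding lie_subalgebra_def by auto
      then show "br a b \<in> projT K i (insert j T)"
        using u v br_0[OF la] unfolding projT_def
        by (intro CollectI exI[of _ "sum_bracket br u v"]) (auto simp: sum_bracket_def)
    qed
  qed
qed

theorem mainTheorem8:
  fixes br :: "'a::euclidean_space \<Rightarrow> 'a \<Rightarrow> 'a"
    and K :: "('a^'n::finite) set"
  assumes "simple_lie_algebra br"
    and "compact_lie_algebra br"
    and "lie_subalgebra (sum_bracket br) K"
    and "diag \<subseteq> K"
  shows "\<exists>P. partition_on (UNIV :: 'n set) P \<and>
             K = {x. \<forall>B\<in>P. \<forall>i\<in>B. \<forall>j\<in>B. x $ i = x $ j}"
proof -
  define r where "r = {(i::'n, j). \<forall>x\<in>K. x $ i = x $ j}"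
  have eq: "equiv UNIV r" unfolding r_def equiv_def refl_on_def sym_def trans_def by auto
  define P where "P = UNIV // r"
  have part: "partition_on UNIV P" unfolding P_def by (rule partition_on_quotient[OF eq])
  have sK: "subspace K" using assms(3) unfolding lie_subalgebra_def by auto
  have "K = {x. \<forall>B\<in>P. \<forall>i\<in>B. \<forall>j\<in>B. x $ i = x $ j}"
  proof
    show "K \<subseteq> {x. \<forall>B\<in>P. \<forall>i\<in>B. \<forall>j\<in>B. x $ i = x $ j}"
    proof
      fix x assume "x \<in> K"
      then show "x \<in> {x. \<forall>B\<in>P. \<forall>i\<in>B. \<forall>j\<in>B. x $ i = x $ j}"
      proof (intro CollectI ballI)
        fix B i j assume "B \<in> P" "i \<in> B" "j \<in> B"
        then obtain k where "B = r `` {k}" unfolding P_def quotient_def by auto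
        then have "(k, i) \<in> r" "(k, j) \<in> r" using \<open>i \<in> B\<close> \<open>j \<in> B\<close> by auto
        then show "x $ i = x $ j" using \<open>x \<in> K\<close> unfolding r_def by auto
      qed
    qed
  next
    show "{x. \<forall>B\<in>P. \<forall>i\<in>B. \<forall>j\<in>B. x $ i = x $ j} \<subseteq> K"
    proof
      fix x :: "'a^'n" assume x: "x \<in> {x. \<forall>B\<in>P. \<forall>i\<in>B. \<forall>j\<in>B. x $ i = x $ j}"
      define g :: "'n set \<Rightarrow> 'a^'n" where "g B = (\<chi> j. if j \<in> B then x $ j else 0)" for B
      have gK: "g B \<in> K" if B: "B \<in> P" for B
      proof -
        obtain i where Bi: "B = r `` {i}" using B unfolding P_def quotient_def by auto
        have iB: "i \<in> B" using Bi eq by (auto simp: r_def)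
        have "projT K i (- B) = UNIV"
          by (rule main_lemma[OF assms(1) assms(3) assms(4)]) (auto simp: Bi r_def)
        then have "x $ i \<in> projT K i (- B)" by simp
        then obtain z where z: "z \<in> K" "\<forall>t\<in>-B. z $ t = 0" "z $ i = x $ i"
          unfolding projT_def by (auto dest: sym)
        have "z = g B"
        proof (rule vec_eq_iff[THEN iffD2], rule allI)
          fix j show "z $ j = g B $ j"
          proof (cases "j \<in> B")
            case True
            then have "(i, j) \<in> r" using Bi by simp
            then have "z $ j = z $ i" using z(1) unfolding r_def by (simp add: case_prod_beta)
            also have "\<dots> = x $ i" by (rule z(3))
            also have "\<dots> = x $ j" using x B iB True by blast
            finally show ?thesis using True by (simp add: g_def)
          next
            case False then show ?thesis using z(2) by (simp add: g_def)
          qed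
        qed
        then show ?thesis using z by simp
      qed
      have "x = sum g P"
      proof (rule vec_eq_iff[THEN iffD2], rule allI)
        fix j
        have jP: "r `` {j} \<in> P" unfolding P_def quotient_def by auto
        have jin: "j \<in> r `` {j}" by (auto simp: r_def)
        have uniq: "B = r `` {j}" if BP: "B \<in> P" "j \<in> B" for B
        proof -
          obtain k where Bk: "B = r `` {k}" using BP(1) unfolding P_def quotient_def by auto
          then have kj: "(k, j) \<in> r" using BP(2) by auto
          show ?thesis using equiv_class_eq[OF eq kj] Bk by simp
        qed
        have "(sum g P) $ j = (\<Sum>B\<in>P. if j \<in> B then x $ j else 0)"
          by (simp add: g_def)
        also have "\<dots> = (\<Sum>B\<in>P. if B = r `` {j} then x $ j else 0)"
        proof (rule sum.cong[OF refl])
          fix B assume "B \<in> P"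
          then have jB: "j \<in> B \<longleftrightarrow> B = r `` {j}" using uniq[of B] jin by blast
          show "(if j \<in> B then x $ j else 0) = (if B = r `` {j} then x $ j else 0)"
            by (simp only: jB)
        qed
        also have "\<dots> = x $ j" using jP by simp
        finally show "x $ j = sum g P $ j" by simp
      qed
      moreover have "sum g P \<in> K" using gK subspace_sum[OF sK] by auto
      ultimately show "x \<in> K" by simp
    qed
  qed
  then show ?thesis using part by blast
qed

end
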